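(* Let $B$ be a connected bipartite graph with parts $X$ and $Y$, and let $B'$ be the graph obtained from $B$ by adding three new vertices $x,z,y$ forming a path $xzy$, and making $x$ adjacent to every vertex of $X$ and $y$ adjacent to every vertex of $Y$. Then for every positive integer $d$, $B$ has boxicity at most $d$ if and only if $B'$ belongs to $(d+1)$-CBU.
   Context: The boxicity of a graph is the minimum $b$ such that the graph is the intersection graph of axis-parallel boxes in $\mathbb{R}^b$. Let $e_1,\ldots,e_k$ be the standard basis of $\mathbb{R}^k$. For $k\ge 1$, a graph belongs to $k$-CBU if one can assign to each vertex an axis-parallel box (product of $k$ closed intervals of positive length) in $\mathbb{R}^k$ such that the boxes have pairwise disjoint interiors, two distinct vertices are adjacent iff their boxes intersect, and any two intersecting boxes intersect in a $(k-1)$-dimensional box orthogonal to $e_1$. *)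

theory Defs
  imports Complex_Main
begin

definition graph :: "'a set \<Rightarrow> ('a \<Rightarrow> 'a \<Rightarrow> bool) \<Rightarrow> bool" where
  "graph V E \<longleftrightarrow> (\<forall>u v. E u v \<longrightarrow> u \<in> V \<and> v \<in> V \<and> u \<noteq> v \<and> E v u)"

definition connected_graph :: "'a set \<Rightarrow> ('a \<Rightarrow> 'a \<Rightarrow> bool) \<Rightarrow> bool" where
  "connected_graph V E \<longleftrightarrow> V \<noteq> {} \<and> (\<forall>u\<in>V. \<forall>v\<in>V. E\<^sup>*\<^sup>* u v)"

definition bipartite_parts :: "'a set \<Rightarrow> ('a \<Rightarrow> 'a \<Rightarrow> bool) \<Rightarrow> 'a set \<Rightarrow> 'a set \<Rightarrow> bool" where
  "bipartite_parts V E X Y \<longleftrightarrow> X \<union> Y = V \<and> X \<inter> Y = {} \<and>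
     (\<forall>u v. E u v \<longrightarrow> (u \<in> X \<and> v \<in> Y) \<or> (u \<in> Y \<and> v \<in> X))"

text \<open>Points of R^k are functions nat => real vanishing at coordinates >= k;
  coordinate 0 corresponds to e_1.\<close>
definition rbox :: "nat \<Rightarrow> (nat \<Rightarrow> real) \<Rightarrow> (nat \<Rightarrow> real) \<Rightarrow> (nat \<Rightarrow> real) set" where
  "rbox k lo hi = {p. (\<forall>i<k. lo i \<le> p i \<and> p i \<le> hi i) \<and> (\<forall>i\<ge>k. p i = 0)}"

definition rbox_interior :: "nat \<Rightarrow> (nat \<Rightarrow> real) \<Rightarrow> (nat \<Rightarrow> real) \<Rightarrow> (nat \<Rightarrow> real) set" where
  "rbox_interior k lo hi = {p. (\<forall>i<k. lo i < p i \<and> p i < hi i) \<and> (\<forall>i\<ge>k. p i = 0)}"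

definition box_rep :: "nat \<Rightarrow> 'a set \<Rightarrow> ('a \<Rightarrow> 'a \<Rightarrow> bool) \<Rightarrow> ('a \<Rightarrow> nat \<Rightarrow> real) \<Rightarrow> ('a \<Rightarrow> nat \<Rightarrow> real) \<Rightarrow> bool" where
  "box_rep k V E lo hi \<longleftrightarrow> (\<forall>v\<in>V. \<forall>i<k. lo v i \<le> hi v i) \<and>
     (\<forall>u\<in>V. \<forall>v\<in>V. u \<noteq> v \<longrightarrow> (E u v \<longleftrightarrow> rbox k (lo u) (hi u) \<inter> rbox k (lo v) (hi v) \<noteq> {}))"

definition boxicity :: "'a set \<Rightarrow> ('a \<Rightarrow> 'a \<Rightarrow> bool) \<Rightarrow> nat" where
  "boxicity V E = (LEAST b. \<exists>lo hi. box_rep b V E lo hi)"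

definition CBU :: "nat \<Rightarrow> 'a set \<Rightarrow> ('a \<Rightarrow> 'a \<Rightarrow> bool) \<Rightarrow> bool" where
  "CBU k V E \<longleftrightarrow> (\<exists>lo hi.
     (\<forall>v\<in>V. \<forall>i<k. lo v i < hi v i) \<and>
     (\<forall>u\<in>V. \<forall>v\<in>V. u \<noteq> v \<longrightarrow> rbox_interior k (lo u) (hi u) \<inter> rbox_interior k (lo v) (hi v) = {}) \<and>
     (\<forall>u\<in>V. \<forall>v\<in>V. u \<noteq> v \<longrightarrow> (E u v \<longleftrightarrow> rbox k (lo u) (hi u) \<inter> rbox k (lo v) (hi v) \<noteq> {})) \<and>
     (\<forall>u\<in>V. \<forall>v\<in>V. u \<noteq> v \<longrightarrow> rbox k (lo u) (hi u) \<inter> rbox k (lo v) (hi v) \<noteq> {} \<longrightarrow>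
        (\<exists>lo' hi'. lo' 0 = hi' 0 \<and> (\<forall>i. 0 < i \<and> i < k \<longrightarrow> lo' i < hi' i) \<and>
           rbox k (lo u) (hi u) \<inter> rbox k (lo v) (hi v) = rbox k lo' hi')))"

datatype 'a ext = Old 'a | NX | NZ | NY

definition ext_V :: "'a set \<Rightarrow> 'a ext set" where
  "ext_V V = Old ` V \<union> {NX, NZ, NY}"

definition ext_E :: "'a set \<Rightarrow> 'a set \<Rightarrow> ('a \<Rightarrow> 'a \<Rightarrow> bool) \<Rightarrow> 'a ext \<Rightarrow> 'a ext \<Rightarrow> bool" where
  "ext_E X Y E a b \<longleftrightarrow> (\<exists>u v. a = Old u \<and> b = Old v \<and> E u v) \<or>
     {a, b} = {NX, NZ} \<or> {a, b} = {NZ, NY} \<or>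
     (\<exists>u\<in>X. {a, b} = {NX, Old u}) \<or> (\<exists>u\<in>Y. {a, b} = {NY, Old u})"

end

theory Submission
  imports Defs
begin

lemma rbox_inter: "rbox k a b \<inter> rbox k c e = rbox k (\<lambda>i. max (a i) (c i)) (\<lambda>i. min (b i) (e i))"
  by (auto simp: rbox_def)

lemma rbox_ne: "rbox k a b \<noteq> {} \<longleftrightarrow> (\<forall>i<k. a i \<le> b i)"
proof
  assume "rbox k a b \<noteq> {}"
  then obtain p where "p \<in> rbox k a b" by blast
  then show "\<forall>i<k. a i \<le> b i" by (force simp: rbox_def)
next
  assume h: "\<forall>i<k. a i \<le> b i"
  have "(\<lambda>i. if i < k then a i else 0) \<in> rbox k a b" using h by (auto simp: rbox_def)
  then show "rbox k a b \<noteq> {}" by blast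
qed

lemma rbox_inter_ne: "rbox k a b \<inter> rbox k c e \<noteq> {} \<longleftrightarrow> (\<forall>i<k. max (a i) (c i) \<le> min (b i) (e i))"
  by (simp add: rbox_inter rbox_ne)

lemma rbox_interior_disj: "i < k \<Longrightarrow> b i \<le> c i \<Longrightarrow> rbox_interior k a b \<inter> rbox_interior k c e = {}"
proof (auto simp: rbox_interior_def)
  fix x assume "i < k" "b i \<le> c i" "\<forall>i<k. a i < x i \<and> x i < b i" "\<forall>i<k. c i < x i \<and> x i < e i"
  then have "x i < b i" "c i < x i" by auto
  then show False using \<open>b i \<le> c i\<close> by linarith
qed

lemma contact0:
  assumes ne: "rbox k a b \<inter> rbox k c e \<noteq> {}" and eq: "rbox k a b \<inter> rbox k c e = rbox k lo' hi'"
    and l0: "lo' 0 = hi' 0" and k: "0 < k" and "a 0 < b 0" "c 0 < e 0"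
  shows "b 0 = c 0 \<or> e 0 = a 0"
proof -
  define m where "m = max (a 0) (c 0)"
  define M where "M = min (b 0) (e 0)"
  obtain p where p: "p \<in> rbox k a b \<inter> rbox k c e" using ne by blast
  have pa: "\<forall>i<k. a i \<le> p i \<and> p i \<le> b i" "\<forall>i<k. c i \<le> p i \<and> p i \<le> e i"
    using p by (auto simp: rbox_def)
  have pm: "m \<le> p 0" "p 0 \<le> M" using pa[rule_format, OF k] by (auto simp: m_def M_def)
  have p0: "a 0 \<le> p 0" "p 0 \<le> b 0" "c 0 \<le> p 0" "p 0 \<le> e 0" using pa[rule_format, OF k] by auto
  have mb: "a 0 \<le> m" "c 0 \<le> m" "m \<le> b 0" "m \<le> e 0" "a 0 \<le> M" "c 0 \<le> M" "M \<le> b 0" "M \<le> e 0"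
    using p0 by (auto simp: m_def M_def)
  have "p(0 := m) \<in> rbox k a b \<inter> rbox k c e" using p mb k by (auto simp: rbox_def)
  then have "p(0 := m) \<in> rbox k lo' hi'" using eq by simp
  then have "\<forall>i<k. lo' i \<le> (p(0 := m)) i \<and> (p(0 := m)) i \<le> hi' i" by (simp add: rbox_def)
  from this[rule_format, OF k] have "lo' 0 \<le> m \<and> m \<le> hi' 0" by simp
  moreover have "p(0 := M) \<in> rbox k a b \<inter> rbox k c e" using p mb k by (auto simp: rbox_def)
  then have "p(0 := M) \<in> rbox k lo' hi'" using eq by simp
  then have "\<forall>i<k. lo' i \<le> (p(0 := M)) i \<and> (p(0 := M)) i \<le> hi' i" by (simp add: rbox_def)
  from this[rule_format, OF k] have "lo' 0 \<le> M \<and> M \<le> hi' 0" by simp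
  ultimately have "m = M" using l0 by linarith
  then show ?thesis using assms(5,6) unfolding m_def M_def by (auto simp: max_def min_def split: if_splits)
qed

lemma CBU_intro:
  fixes lo hi :: "'a \<Rightarrow> nat \<Rightarrow> real"
  assumes pos: "\<forall>p\<in>W. \<forall>i<k. lo p i < hi p i" and k: "0 < k"
    and pairs: "\<And>p q. p \<in> W \<Longrightarrow> q \<in> W \<Longrightarrow> p \<noteq> q \<Longrightarrow>
      (\<not> R p q \<and> (\<exists>i<k. hi p i < lo q i \<or> hi q i < lo p i)) \<or>
      (R p q \<and> max (lo p 0) (lo q 0) = min (hi p 0) (hi q 0) \<and>
        (\<forall>i. 0 < i \<and> i < k \<longrightarrow> max (lo p i) (lo q i) < min (hi p i) (hi q i)))"
  shows "CBU k W R"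
  unfolding CBU_def
proof (rule exI[of _ lo], rule exI[of _ hi], intro conjI)
  show "\<forall>v\<in>W. \<forall>i<k. lo v i < hi v i" by fact
  show "\<forall>p\<in>W. \<forall>q\<in>W. p \<noteq> q \<longrightarrow> rbox_interior k (lo p) (hi p) \<inter> rbox_interior k (lo q) (hi q) = {}"
  proof (intro ballI impI)
  fix p q assume pq: "p \<in> W" "q \<in> W" "p \<noteq> q"
  from pairs[OF pq] show "rbox_interior k (lo p) (hi p) \<inter> rbox_interior k (lo q) (hi q) = {}"
  proof
    assume "\<not> R p q \<and> (\<exists>i<k. hi p i < lo q i \<or> hi q i < lo p i)"
    then obtain i where "i<k" "hi p i < lo q i \<or> hi q i < lo p i" by blast
    then show ?thesis using rbox_interior_disj[of i k "hi p" "lo q" "lo p" "hi q"]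
        rbox_interior_disj[of i k "hi q" "lo p" "lo q" "hi p"] by auto
  next
    assume h: "R p q \<and> max (lo p 0) (lo q 0) = min (hi p 0) (hi q 0) \<and>
        (\<forall>i. 0 < i \<and> i < k \<longrightarrow> max (lo p i) (lo q i) < min (hi p i) (hi q i))"
    have "lo p 0 < hi p 0" "lo q 0 < hi q 0" using pos pq k by auto
    then have "hi p 0 \<le> lo q 0 \<or> hi q 0 \<le> lo p 0" using h by (auto simp: max_def min_def split: if_splits)
    then show ?thesis using rbox_interior_disj[of 0 k "hi p" "lo q" "lo p" "hi q"]
        rbox_interior_disj[of 0 k "hi q" "lo p" "lo q" "hi p"] k by auto
  qed
  qed
  show "\<forall>p\<in>W. \<forall>q\<in>W. p \<noteq> q \<longrightarrow> (R p q \<longleftrightarrow> rbox k (lo p) (hi p) \<inter> rbox k (lo q) (hi q) \<noteq> {})"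
  proof (intro ballI impI)
  fix p q assume pq: "p \<in> W" "q \<in> W" "p \<noteq> q"
  from pairs[OF pq] show "R p q \<longleftrightarrow> rbox k (lo p) (hi p) \<inter> rbox k (lo q) (hi q) \<noteq> {}"
  proof
    assume "\<not> R p q \<and> (\<exists>i<k. hi p i < lo q i \<or> hi q i < lo p i)"
    then show ?thesis unfolding rbox_inter_ne by force
  next
    assume h: "R p q \<and> max (lo p 0) (lo q 0) = min (hi p 0) (hi q 0) \<and>
        (\<forall>i. 0 < i \<and> i < k \<longrightarrow> max (lo p i) (lo q i) < min (hi p i) (hi q i))"
    have "\<forall>i<k. max (lo p i) (lo q i) \<le> min (hi p i) (hi q i)"
    proof (intro allI impI)
      fix i assume "i < k" then show "max (lo p i) (lo q i) \<le> min (hi p i) (hi q i)"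
        using h by (cases "i = 0") auto
    qed
    then show ?thesis using h unfolding rbox_inter_ne by simp
  qed
  qed
  show "\<forall>p\<in>W. \<forall>q\<in>W. p \<noteq> q \<longrightarrow> rbox k (lo p) (hi p) \<inter> rbox k (lo q) (hi q) \<noteq> {} \<longrightarrow>
        (\<exists>lo' hi'. lo' 0 = hi' 0 \<and> (\<forall>i. 0 < i \<and> i < k \<longrightarrow> lo' i < hi' i) \<and>
           rbox k (lo p) (hi p) \<inter> rbox k (lo q) (hi q) = rbox k lo' hi')"
  proof (intro ballI impI)
  fix p q assume pq: "p \<in> W" "q \<in> W" "p \<noteq> q"
  assume "rbox k (lo p) (hi p) \<inter> rbox k (lo q) (hi q) \<noteq> {}"
  with pairs[OF pq] have h: "max (lo p 0) (lo q 0) = min (hi p 0) (hi q 0) \<and>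
        (\<forall>i. 0 < i \<and> i < k \<longrightarrow> max (lo p i) (lo q i) < min (hi p i) (hi q i))"
    unfolding rbox_inter_ne by force
  show "\<exists>lo' hi'. lo' 0 = hi' 0 \<and> (\<forall>i. 0 < i \<and> i < k \<longrightarrow> lo' i < hi' i) \<and>
           rbox k (lo p) (hi p) \<inter> rbox k (lo q) (hi q) = rbox k lo' hi'"
    by (rule exI[of _ "\<lambda>i. max (lo p i) (lo q i)"], rule exI[of _ "\<lambda>i. min (hi p i) (hi q i)"])
      (use h in \<open>simp add: rbox_inter\<close>)
  qed
qed



lemma box_rep_exists:
  assumes fin: "finite V" and g: "graph V E"
  shows "\<exists>b lo hi. box_rep b V E lo hi"
proof -
  obtain f where f: "bij_betw f {0..<card V} V" using ex_bij_betw_nat_finite[OF fin] by blast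
  define lo :: "'a \<Rightarrow> nat \<Rightarrow> real" where "lo v i = (if v = f i \<or> E v (f i) then 0 else 1)" for v i
  define hi :: "'a \<Rightarrow> nat \<Rightarrow> real" where "hi v i = (if v = f i then 0 else 1)" for v i
  have sym: "E u v \<Longrightarrow> E v u" for u v using g unfolding graph_def by blast
  have "box_rep (card V) V E lo hi"
    unfolding box_rep_def rbox_inter_ne
  proof (intro conjI ballI allI impI)
    fix v i show "lo v i \<le> hi v i" by (simp add: lo_def hi_def)
  next
    fix u v assume uv: "u \<in> V" "v \<in> V" "u \<noteq> v"
    show "E u v \<longleftrightarrow> (\<forall>i<card V. max (lo u i) (lo v i) \<le> min (hi u i) (hi v i))"
    proof
      assume "E u v"
      then show "\<forall>i<card V. max (lo u i) (lo v i) \<le> min (hi u i) (hi v i)"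
        using sym[of u v] uv by (auto simp: lo_def hi_def)
    next
      assume h: "\<forall>i<card V. max (lo u i) (lo v i) \<le> min (hi u i) (hi v i)"
      obtain i where i: "i < card V" "f i = u" using f uv unfolding bij_betw_def by force
      from h[rule_format, OF i(1)] i uv have "E v u" by (auto simp: lo_def hi_def split: if_splits)
      then show "E u v" by (rule sym)
    qed
  qed
  then show ?thesis by blast
qed

lemma box_rep_pad:
  assumes "box_rep b V E lo hi" "b \<le> d"
  shows "box_rep d V E (\<lambda>v i. if i < b then lo v i else 0) (\<lambda>v i. if i < b then hi v i else 0)"
proof -
  have eq: "(\<forall>i<d. max (if i < b then lo u i else 0) (if i < b then lo v i else 0)
      \<le> min (if i < b then hi u i else 0) (if i < b then hi v i else 0)) \<longleftrightarrow>
      (\<forall>i<b. max (lo u i) (lo v i) \<le> min (hi u i) (hi v i))" for u v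
    using assms(2) by (auto split: if_splits)
  show ?thesis using assms(1) unfolding box_rep_def rbox_inter_ne eq by auto
qed

lemma box_rep_eps:
  assumes fin: "finite V" and br: "box_rep d V E L H"
  shows "\<exists>(L'::'a \<Rightarrow> nat \<Rightarrow> real) (H'::'a \<Rightarrow> nat \<Rightarrow> real). (\<forall>v\<in>V. \<forall>i<d. L' v i < H' v i) \<and>
    (\<forall>u\<in>V. \<forall>v\<in>V. u \<noteq> v \<longrightarrow> E u v \<longrightarrow> (\<forall>i<d. L' u i < H' v i \<and> L' v i < H' u i)) \<and>
    (\<forall>u\<in>V. \<forall>v\<in>V. u \<noteq> v \<longrightarrow> \<not> E u v \<longrightarrow> (\<exists>i<d. H' u i < L' v i \<or> H' v i < L' u i))"
proof -
  define G where "G = (\<lambda>(u, v, i). L v i - H u i) ` {(u, v, i). u \<in> V \<and> v \<in> V \<and> i < d \<and> H u i < L v i}"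
  have "{(u, v, i). u \<in> V \<and> v \<in> V \<and> i < d \<and> H u i < L v i} \<subseteq> V \<times> V \<times> {..<d}" by auto
  then have finG: "finite G" unfolding G_def using fin by (meson finite_SigmaI finite_imageI finite_lessThan finite_subset)
  define \<epsilon> where "\<epsilon> = Min (insert 1 G) / 3"
  have Gpos: "\<forall>g\<in>insert 1 G. 0 < g" unfolding G_def by auto
  have "0 < Min (insert 1 G)" using finG Gpos by simp
  then have epos: "0 < \<epsilon>" unfolding \<epsilon>_def by simp
  have gap: "3 * \<epsilon> \<le> L v i - H u i" if "u \<in> V" "v \<in> V" "i < d" "H u i < L v i" for u v i
  proof -
    have "L v i - H u i \<in> G" unfolding G_def using that by force
    then have "Min (insert 1 G) \<le> L v i - H u i" using finG by simp
    then show ?thesis unfolding \<epsilon>_def by simp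
  qed
  have LH: "\<forall>v\<in>V. \<forall>i<d. L v i \<le> H v i" using br unfolding box_rep_def by blast
  have adj: "\<forall>u\<in>V. \<forall>v\<in>V. u \<noteq> v \<longrightarrow> (E u v \<longleftrightarrow> (\<forall>i<d. max (L u i) (L v i) \<le> min (H u i) (H v i)))"
    using br unfolding box_rep_def rbox_inter_ne by blast
  show ?thesis
  proof (rule exI[of _ "\<lambda>v i. L v i - \<epsilon>"], rule exI[of _ "\<lambda>v i. H v i + \<epsilon>"], intro conjI ballI allI impI)
    fix v i assume "v \<in> V" "i < d" then show "L v i - \<epsilon> < H v i + \<epsilon>" using LH epos by force
  next
    fix u v i assume uv: "u \<in> V" "v \<in> V" "u \<noteq> v" "E u v" "i < d"
    then have "max (L u i) (L v i) \<le> min (H u i) (H v i)" using adj by blast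
    then show "L u i - \<epsilon> < H v i + \<epsilon>" "L v i - \<epsilon> < H u i + \<epsilon>" using epos by simp_all
  next
    fix u v assume uv: "u \<in> V" "v \<in> V" "u \<noteq> v" "\<not> E u v"
    then obtain i where i: "i < d" "\<not> max (L u i) (L v i) \<le> min (H u i) (H v i)" using adj by blast
    have "L u i \<le> H u i" "L v i \<le> H v i" using LH uv i by auto
    then have "H u i < L v i \<or> H v i < L u i" using i by (auto simp: max_def min_def split: if_splits)
    then have "H u i + \<epsilon> < L v i - \<epsilon> \<or> H v i + \<epsilon> < L u i - \<epsilon>"
      using gap[of u v i] gap[of v u i] uv i epos by auto
    then show "\<exists>i<d. H u i + \<epsilon> < L v i - \<epsilon> \<or> H v i + \<epsilon> < L u i - \<epsilon>" using i by blast
  qed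
qed



lemma extE_simps:
  "ext_E X Y E (Old u) (Old v) = E u v"
  "ext_E X Y E NX (Old v) = (v \<in> X)" "ext_E X Y E (Old v) NX = (v \<in> X)"
  "ext_E X Y E NY (Old v) = (v \<in> Y)" "ext_E X Y E (Old v) NY = (v \<in> Y)"
  "ext_E X Y E NZ (Old v) = False" "ext_E X Y E (Old v) NZ = False"
  "ext_E X Y E NX NZ" "ext_E X Y E NZ NX" "ext_E X Y E NY NZ" "ext_E X Y E NZ NY"
  "ext_E X Y E NX NY = False" "ext_E X Y E NY NX = False"
  by (auto simp: ext_E_def doubleton_eq_iff)

lemma forward:
  assumes fin: "finite V" and g: "graph V E" and bp: "bipartite_parts V E X Y" and d: "d \<ge> 1"
    and br: "box_rep d V E L H"
  shows "CBU (d + 1) (ext_V V) (ext_E X Y E)"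
proof -
  obtain L' H' :: "'a \<Rightarrow> nat \<Rightarrow> real" where
    pos: "\<forall>v\<in>V. \<forall>i<d. L' v i < H' v i" and
    adj: "\<forall>u\<in>V. \<forall>v\<in>V. u \<noteq> v \<longrightarrow> E u v \<longrightarrow> (\<forall>i<d. L' u i < H' v i \<and> L' v i < H' u i)" and
    nadj: "\<forall>u\<in>V. \<forall>v\<in>V. u \<noteq> v \<longrightarrow> \<not> E u v \<longrightarrow> (\<exists>i<d. H' u i < L' v i \<or> H' v i < L' u i)"
    using box_rep_eps[OF fin br] by blast
  define S where "S = (\<lambda>(v, i). \<bar>L' v i\<bar> + \<bar>H' v i\<bar>) ` (V \<times> {..<d})"
  have finS: "finite S" unfolding S_def using fin by simp
  define K where "K = Max (insert 0 S)"
  have K0: "0 \<le> K" unfolding K_def using finS by simp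
  have KB: "\<bar>L' v i\<bar> \<le> K \<and> \<bar>H' v i\<bar> \<le> K" if "v \<in> V" "i < d" for v i
  proof -
    have "\<bar>L' v i\<bar> + \<bar>H' v i\<bar> \<in> insert 0 S" unfolding S_def using that by force
    then have "\<bar>L' v i\<bar> + \<bar>H' v i\<bar> \<le> K" unfolding K_def using finS by simp
    then show ?thesis using abs_ge_zero[of "L' v i"] abs_ge_zero[of "H' v i"] by linarith
  qed
  define R where "R = K + 3"
  have Rpos: "0 < R" using K0 by (simp add: R_def)
  define lo :: "'a ext \<Rightarrow> nat \<Rightarrow> real" where "lo p i = (case p of
      Old v \<Rightarrow> if i = 0 then (if v \<in> X then 0 else 1) else L' v (i - 1)
    | NX \<Rightarrow> if i = 0 then -1 else - R
    | NY \<Rightarrow> if i = 0 then 2 else - R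
    | NZ \<Rightarrow> if i = 0 then 0 else if i = 1 then K + 1 else - R)" for p i
  define hi :: "'a ext \<Rightarrow> nat \<Rightarrow> real" where "hi p i = (case p of
      Old v \<Rightarrow> if i = 0 then (if v \<in> X then 1 else 2) else H' v (i - 1)
    | NX \<Rightarrow> if i = 0 then 0 else R
    | NY \<Rightarrow> if i = 0 then 3 else R
    | NZ \<Rightarrow> if i = 0 then 2 else if i = 1 then K + 2 else R)" for p i
  have XY: "X \<union> Y = V" "X \<inter> Y = {}" and EXY: "\<And>u v. E u v \<Longrightarrow> (u \<in> X \<and> v \<in> Y) \<or> (u \<in> Y \<and> v \<in> X)"
    using bp unfolding bipartite_parts_def by blast+
  have Esym: "\<And>u v. E u v \<Longrightarrow> E v u" using g unfolding graph_def by blast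
  have Old_lo: "lo (Old v) (Suc i) = L' v i" "hi (Old v) (Suc i) = H' v i" for v i
    by (simp_all add: lo_def hi_def)
  have Old_in: "\<And>v i. v \<in> V \<Longrightarrow> 0 < i \<Longrightarrow> i < d + 1 \<Longrightarrow> - K \<le> lo (Old v) i \<and> hi (Old v) i \<le> K"
  proof -
    fix v i assume "v \<in> V" "0 < i" "i < d + 1"
    then obtain j where "i = Suc j" "j < d" by (cases i) auto
    then show "- K \<le> lo (Old v) i \<and> hi (Old v) i \<le> K" using KB[of v j] \<open>v \<in> V\<close> by (auto simp: Old_lo)
  qed
  show ?thesis
  proof (rule CBU_intro)
    show "0 < d + 1" by simp
    show "\<forall>p\<in>ext_V V. \<forall>i<d + 1. lo p i < hi p i"
    proof (intro ballI allI impI)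
      fix p i assume p: "p \<in> ext_V V" and i: "i < d + 1"
      show "lo p i < hi p i"
      proof (cases p)
        case (Old v)
        then have v: "v \<in> V" using p by (auto simp: ext_V_def)
        show ?thesis
        proof (cases i)
          case 0 then show ?thesis using Old by (simp add: lo_def hi_def)
        next
          case (Suc j) then show ?thesis using Old pos v i by (simp add: lo_def hi_def)
        qed
      qed (use K0 in \<open>auto simp: lo_def hi_def R_def\<close>)
    qed
    fix p q assume p: "p \<in> ext_V V" and q: "q \<in> ext_V V" and pq: "p \<noteq> q"
    let ?A = "\<not> ext_E X Y E p q \<and> (\<exists>i<d + 1. hi p i < lo q i \<or> hi q i < lo p i)"
    let ?B = "ext_E X Y E p q \<and> max (lo p 0) (lo q 0) = min (hi p 0) (hi q 0) \<and>
        (\<forall>i. 0 < i \<and> i < d + 1 \<longrightarrow> max (lo p i) (lo q i) < min (hi p i) (hi q i))"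
    have d1: "1 < d + 1" using d by simp
    show "?A \<or> ?B"
    proof (cases p)
      case (Old u)
      then have u: "u \<in> V" using p by (auto simp: ext_V_def)
      show ?thesis
      proof (cases q)
        case (Old v)
        then have v: "v \<in> V" using q by (auto simp: ext_V_def)
        have uv: "u \<noteq> v" using pq Old \<open>p = Old u\<close> by simp
        show ?thesis
        proof (cases "E u v")
          case True
          have "max (lo p i) (lo q i) < min (hi p i) (hi q i)" if hi: "0 < i" "i < d + 1" for i
          proof -
            obtain j where "i = Suc j" "j < d" using hi by (cases i) auto
            then show ?thesis using adj u v uv True \<open>p = Old u\<close> Old pos by (auto simp: Old_lo)
          qed
          moreover have "max (lo p 0) (lo q 0) = min (hi p 0) (hi q 0)"
            using EXY[OF True] XY \<open>p = Old u\<close> Old by (auto simp: lo_def hi_def)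
          ultimately show ?thesis using True \<open>p = Old u\<close> Old by (simp add: extE_simps)
        next
          case False
          then obtain j where "j < d" "H' u j < L' v j \<or> H' v j < L' u j" using nadj u v uv by blast
          then have "Suc j < d + 1 \<and> (hi p (Suc j) < lo q (Suc j) \<or> hi q (Suc j) < lo p (Suc j))"
            using \<open>p = Old u\<close> Old by (simp add: Old_lo)
          then show ?thesis using False \<open>p = Old u\<close> Old by (auto simp: extE_simps)
        qed
      next
        case NX
        show ?thesis
        proof (cases "u \<in> X")
          case True
          have "max (lo p i) (lo q i) < min (hi p i) (hi q i)" if "0 < i" "i < d + 1" for i
            using Old_in[OF u that] pos \<open>p = Old u\<close> NX that u
            by (cases i) (auto simp: lo_def hi_def R_def)
          then show ?thesis using True \<open>p = Old u\<close> NX by (simp add: extE_simps lo_def hi_def Rpos)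
        next
          case False
          then show ?thesis using \<open>p = Old u\<close> NX by (auto simp: extE_simps lo_def hi_def intro!: exI[of _ 0])
        qed
      next
        case NY
        show ?thesis
        proof (cases "u \<in> Y")
          case True
          then have "u \<notin> X" using XY by blast
          have "max (lo p i) (lo q i) < min (hi p i) (hi q i)" if "0 < i" "i < d + 1" for i
            using Old_in[OF u that] pos \<open>p = Old u\<close> NY that u
            by (cases i) (auto simp: lo_def hi_def R_def)
          then show ?thesis using True \<open>u \<notin> X\<close> \<open>p = Old u\<close> NY by (simp add: extE_simps lo_def hi_def Rpos)
        next
          case False
          then have "u \<in> X" using XY u by blast
          then show ?thesis using False \<open>p = Old u\<close> NY by (auto simp: extE_simps lo_def hi_def intro!: exI[of _ 0])
        qed
      next
        case NZ
        have "hi p 1 < lo q 1" using Old_in[OF u _ d1] \<open>p = Old u\<close> NZ by (simp add: lo_def)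
        then show ?thesis using d1 \<open>p = Old u\<close> NZ by (auto simp: extE_simps)
      qed
    next
      case NX
      show ?thesis
      proof (cases q)
        case (Old u)
        then have u: "u \<in> V" using q by (auto simp: ext_V_def)
        show ?thesis
        proof (cases "u \<in> X")
          case True
          have "max (lo p i) (lo q i) < min (hi p i) (hi q i)" if "0 < i" "i < d + 1" for i
            using Old_in[OF u that] pos \<open>q = Old u\<close> NX that u
            by (cases i) (auto simp: lo_def hi_def R_def)
          then show ?thesis using True \<open>q = Old u\<close> NX by (simp add: extE_simps lo_def hi_def Rpos)
        next
          case False
          then show ?thesis using \<open>q = Old u\<close> NX by (auto simp: extE_simps lo_def hi_def intro!: exI[of _ 0])
        qed
      next
        case NZ
        have "max (lo p i) (lo q i) < min (hi p i) (hi q i)" if "0 < i" "i < d + 1" for i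
          using that NZ \<open>p = NX\<close> K0 by (auto simp: lo_def hi_def R_def)
        then show ?thesis using NZ \<open>p = NX\<close> by (simp add: extE_simps lo_def hi_def Rpos)
      next
        case NY
        then show ?thesis using \<open>p = NX\<close> by (auto simp: extE_simps lo_def hi_def intro!: exI[of _ 0])
      qed (use pq \<open>p = NX\<close> in simp)
    next
      case NY
      show ?thesis
      proof (cases q)
        case (Old u)
        then have u: "u \<in> V" using q by (auto simp: ext_V_def)
        show ?thesis
        proof (cases "u \<in> Y")
          case True
          then have "u \<notin> X" using XY by blast
          have "max (lo p i) (lo q i) < min (hi p i) (hi q i)" if "0 < i" "i < d + 1" for i
            using Old_in[OF u that] pos \<open>q = Old u\<close> NY that u
            by (cases i) (auto simp: lo_def hi_def R_def)
          then show ?thesis using True \<open>u \<notin> X\<close> \<open>q = Old u\<close> NY by (simp add: extE_simps lo_def hi_def Rpos)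
        next
          case False
          then have "u \<in> X" using XY u by blast
          then show ?thesis using False \<open>q = Old u\<close> NY by (auto simp: extE_simps lo_def hi_def intro!: exI[of _ 0])
        qed
      next
        case NZ
        have "max (lo p i) (lo q i) < min (hi p i) (hi q i)" if "0 < i" "i < d + 1" for i
          using that NZ \<open>p = NY\<close> K0 by (auto simp: lo_def hi_def R_def)
        then show ?thesis using NZ \<open>p = NY\<close> by (simp add: extE_simps lo_def hi_def Rpos)
      next
        case NX
        then show ?thesis using \<open>p = NY\<close> by (auto simp: extE_simps lo_def hi_def intro!: exI[of _ 0])
      qed (use pq \<open>p = NY\<close> in simp)
    next
      case NZ
      show ?thesis
      proof (cases q)
        case (Old u)
        then have u: "u \<in> V" using q by (auto simp: ext_V_def)
        have "hi q 1 < lo p 1" using Old_in[OF u _ d1] \<open>q = Old u\<close> NZ by (simp add: lo_def)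
        then show ?thesis using d1 \<open>q = Old u\<close> NZ by (auto simp: extE_simps)
      next
        case NX
        have "max (lo p i) (lo q i) < min (hi p i) (hi q i)" if "0 < i" "i < d + 1" for i
          using that NX \<open>p = NZ\<close> K0 by (auto simp: lo_def hi_def R_def)
        then show ?thesis using NX \<open>p = NZ\<close> by (simp add: extE_simps lo_def hi_def Rpos)
      next
        case NY
        have "max (lo p i) (lo q i) < min (hi p i) (hi q i)" if "0 < i" "i < d + 1" for i
          using that NY \<open>p = NZ\<close> K0 by (auto simp: lo_def hi_def R_def)
        then show ?thesis using NY \<open>p = NZ\<close> by (simp add: extE_simps lo_def hi_def Rpos)
      qed (use pq \<open>p = NZ\<close> in simp)
    qed
  qed
qed



lemma backward:
  assumes g: "graph V E" and conn: "connected_graph V E" and bp: "bipartite_parts V E X Y"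
    and cbu: "CBU (d + 1) (ext_V V) (ext_E X Y E)"
  shows "\<exists>lo hi. box_rep d V E lo hi"
proof -
  obtain lo hi where pos: "\<forall>v\<in>ext_V V. \<forall>i<d + 1. lo v i < hi v i"
    and adj: "\<forall>u\<in>ext_V V. \<forall>v\<in>ext_V V. u \<noteq> v \<longrightarrow> (ext_E X Y E u v \<longleftrightarrow> rbox (d + 1) (lo u) (hi u) \<inter> rbox (d + 1) (lo v) (hi v) \<noteq> {})"
    and fac: "\<forall>u\<in>ext_V V. \<forall>v\<in>ext_V V. u \<noteq> v \<longrightarrow> rbox (d + 1) (lo u) (hi u) \<inter> rbox (d + 1) (lo v) (hi v) \<noteq> {} \<longrightarrow>
        (\<exists>lo' hi'. lo' 0 = hi' 0 \<and> (\<forall>i. 0 < i \<and> i < d + 1 \<longrightarrow> lo' i < hi' i) \<and>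
           rbox (d + 1) (lo u) (hi u) \<inter> rbox (d + 1) (lo v) (hi v) = rbox (d + 1) lo' hi')"
    using cbu unfolding CBU_def by (elim exE conjE) (rule that; assumption)
  have contact: "hi p 0 = lo q 0 \<or> hi q 0 = lo p 0"
    if pq: "p \<in> ext_V V" "q \<in> ext_V V" "p \<noteq> q" "ext_E X Y E p q" for p q
  proof -
    have ne: "rbox (d + 1) (lo p) (hi p) \<inter> rbox (d + 1) (lo q) (hi q) \<noteq> {}"
      using adj[rule_format, OF pq(1,2,3)] pq(4) by (rule iffD1)
    then obtain lo' hi' where "lo' 0 = hi' 0" "rbox (d + 1) (lo p) (hi p) \<inter> rbox (d + 1) (lo q) (hi q) = rbox (d + 1) lo' hi'"
      using fac[rule_format, OF pq(1,2,3) ne] by (elim exE conjE) (rule that; assumption)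
    moreover have "lo p 0 < hi p 0" "lo q 0 < hi q 0" using pos pq by auto
    ultimately show ?thesis using contact0[OF ne] by auto
  qed
  have XY: "X \<union> Y = V" "X \<inter> Y = {}" and EXY: "\<And>u v. E u v \<Longrightarrow> (u \<in> X \<and> v \<in> Y) \<or> (u \<in> Y \<and> v \<in> X)"
    using bp unfolding bipartite_parts_def by blast+
  have Esym: "\<And>u v. E u v \<Longrightarrow> E v u" and EV: "\<And>u v. E u v \<Longrightarrow> u \<in> V \<and> v \<in> V \<and> u \<noteq> v"
    using g unfolding graph_def by blast+
  have mem: "NX \<in> ext_V V" "NY \<in> ext_V V" "NZ \<in> ext_V V" "\<And>u. u \<in> V \<Longrightarrow> Old u \<in> ext_V V"
    by (auto simp: ext_V_def)
  define l where "l w = lo (Old w) 0" for w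
  define r where "r w = hi (Old w) 0" for w
  define a where "a = lo NX 0"
  define b where "b = hi NX 0"
  define c where "c = lo NY 0"
  define e where "e = hi NY 0"
  define lz where "lz = lo NZ 0"
  define rz where "rz = hi NZ 0"
  have lr: "\<And>w. w \<in> V \<Longrightarrow> l w < r w" using pos mem unfolding l_def r_def by auto
  have ab: "a < b" "c < e" "lz < rz" using pos mem unfolding a_def b_def c_def e_def lz_def rz_def by auto
  have xX: "r u = a \<or> b = l u" if "u \<in> X" for u
    using contact[of "Old u" NX] that XY mem unfolding r_def l_def a_def b_def by (auto simp: extE_simps)
  have yY: "r u = c \<or> e = l u" if "u \<in> Y" for u
    using contact[of "Old u" NY] that XY mem unfolding r_def l_def c_def e_def by (auto simp: extE_simps)
  have xz: "b = lz \<or> rz = a"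
    using contact[of NX NZ] mem unfolding lz_def rz_def a_def b_def by (auto simp: extE_simps)
  have zy: "rz = c \<or> e = lz"
    using contact[of NZ NY] mem unfolding lz_def rz_def c_def e_def by (auto simp: extE_simps)
  have eUV: "r u = l v \<or> r v = l u" if "E u v" for u v
    using contact[of "Old u" "Old v"] that EV[OF that] mem unfolding r_def l_def by (auto simp: extE_simps)
  define pl where "pl s w = (if (w \<in> X) = s then r w else l w)" for s w
  have cl: "pl s w = pl s w2" if h: "E w w1" "E w w2" "pl s w = pl s w1" for s w w1 w2
  proof -
    have V: "w \<in> V" "w1 \<in> V" "w2 \<in> V" using EV h by auto
    have lrs: "l w < r w" "l w1 < r w1" "l w2 < r w2" using lr V by auto
    have e1: "r w = l w1 \<or> r w1 = l w" "r w = l w2 \<or> r w2 = l w" using eUV h by auto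
    show ?thesis
    proof (cases "w \<in> X")
      case True
      then have "w1 \<in> Y" "w2 \<in> Y" "w1 \<notin> X" "w2 \<notin> X" using EXY h XY by blast+
      then have f: "r w1 = c \<or> e = l w1" "r w2 = c \<or> e = l w2" using yY by auto
      have f2: "r w = a \<or> b = l w" using xX True by auto
      show ?thesis using True \<open>w1 \<notin> X\<close> \<open>w2 \<notin> X\<close> h(3) f f2 lrs e1 ab xz zy
        unfolding pl_def by (cases s) (simp_all; smt (verit))+
    next
      case False
      then have "w \<in> Y" "w1 \<in> X" "w2 \<in> X" using EXY h XY V by blast+
      then have f: "r w1 = a \<or> b = l w1" "r w2 = a \<or> b = l w2" using xX by auto
      have f2: "r w = c \<or> e = l w" using yY \<open>w \<in> Y\<close> by auto
      show ?thesis using False \<open>w1 \<in> X\<close> \<open>w2 \<in> X\<close> h(3) f f2 lrs e1 ab xz zy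
        unfolding pl_def by (cases s) (simp_all; smt (verit))+
    qed
  qed
  have gamma: "\<exists>\<gamma>. \<forall>w\<in>V. l w \<le> \<gamma> \<and> \<gamma> \<le> r w"
  proof (cases "\<exists>u v. E u v")
    case True
    then obtain u0 v0 where e0: "E u0 v0" by blast
    have "pl True u0 = pl True v0 \<or> pl False u0 = pl False v0"
      using eUV[OF e0] EXY[OF e0] XY unfolding pl_def by auto
    then obtain s where s: "pl s u0 = pl s v0" by blast
    have inv: "pl s w = pl s u0 \<and> (\<forall>w'. E w w' \<longrightarrow> pl s w = pl s w')" if "E\<^sup>*\<^sup>* u0 w" for w
      using that
    proof (induction rule: rtranclp_induct)
      case base
      then show ?case using cl[OF e0 _ s] by blast
    next
      case (step y z)
      then have "pl s z = pl s u0" by (metis)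
      moreover have "pl s z = pl s w'" if "E z w'" for w'
        using cl[OF Esym[OF step(2)] that] step by metis
      ultimately show ?case by blast
    qed
    have "u0 \<in> V" using EV e0 by blast
    then have all: "\<forall>w\<in>V. pl s w = pl s u0" using conn inv unfolding connected_graph_def by blast
    show ?thesis
    proof (intro exI ballI)
      fix w assume w: "w \<in> V"
      have "pl s u0 = pl s w" using all w by simp
      moreover have "pl s w = r w \<or> pl s w = l w" by (simp add: pl_def)
      moreover have "l w < r w" using lr w by simp
      ultimately show "l w \<le> pl s u0 \<and> pl s u0 \<le> r w" by auto
    qed
  next
    case False
    obtain w0 where w0: "w0 \<in> V" using conn unfolding connected_graph_def by blast
    have "w = w0" if "w \<in> V" for w
    proof -
      have "E\<^sup>*\<^sup>* w0 w" using conn w0 that unfolding connected_graph_def by blast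
      then show ?thesis using False by (cases rule: rtranclp.cases) auto
    qed
    then have "\<forall>w\<in>V. w = w0" by blast
    then show ?thesis using lr[OF w0] by (intro exI[of _ "l w0"]) auto
  qed
  then obtain \<gamma> where gm: "\<forall>w\<in>V. l w \<le> \<gamma> \<and> \<gamma> \<le> r w" by blast
  have "box_rep d V E (\<lambda>v i. lo (Old v) (Suc i)) (\<lambda>v i. hi (Old v) (Suc i))"
    unfolding box_rep_def rbox_inter_ne
  proof (intro conjI ballI allI impI)
    fix v i assume "v \<in> V" "i < d"
    then show "lo (Old v) (Suc i) \<le> hi (Old v) (Suc i)" using pos mem by force
  next
    fix u v assume uv: "u \<in> V" "v \<in> V" "u \<noteq> v"
    have "E u v \<longleftrightarrow> (\<forall>i<Suc d. max (lo (Old u) i) (lo (Old v) i) \<le> min (hi (Old u) i) (hi (Old v) i))"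
      using adj[rule_format, OF mem(4)[OF uv(1)] mem(4)[OF uv(2)]] uv(3) unfolding rbox_inter_ne
      by (simp add: extE_simps)
    moreover have "max (lo (Old u) 0) (lo (Old v) 0) \<le> min (hi (Old u) 0) (hi (Old v) 0)"
    proof -
      have "l u \<le> \<gamma>" "\<gamma> \<le> r u" "l v \<le> \<gamma>" "\<gamma> \<le> r v" using gm uv by auto
      then show ?thesis unfolding l_def r_def by simp
    qed
    ultimately show "E u v \<longleftrightarrow> (\<forall>i<d. max (lo (Old u) (Suc i)) (lo (Old v) (Suc i)) \<le> min (hi (Old u) (Suc i)) (hi (Old v) (Suc i)))"
      unfolding All_less_Suc2 by blast
  qed
  then show ?thesis by blast
qed


theorem mainTheorem8:
  fixes V X Y :: "'a set" and E :: "'a \<Rightarrow> 'a \<Rightarrow> bool" and d :: nat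
  assumes "finite V" and "graph V E" and "connected_graph V E"
    and "bipartite_parts V E X Y" and "d \<ge> 1"
  shows "boxicity V E \<le> d \<longleftrightarrow> CBU (d + 1) (ext_V V) (ext_E X Y E)"
proof
  assume bd: "boxicity V E \<le> d"
  have "\<exists>b lo hi. box_rep b V E lo hi" by (rule box_rep_exists[OF assms(1,2)])
  then have "\<exists>lo hi. box_rep (boxicity V E) V E lo hi" unfolding boxicity_def by (rule LeastI_ex)
  then obtain lo hi where "box_rep (boxicity V E) V E lo hi" by blast
  from box_rep_pad[OF this bd] show "CBU (d + 1) (ext_V V) (ext_E X Y E)"
    by (rule forward[OF assms(1,2,4,5)])
next
  assume "CBU (d + 1) (ext_V V) (ext_E X Y E)"
  then have "\<exists>lo hi. box_rep d V E lo hi" using backward[OF assms(2,3,4)] by blast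
  then show "boxicity V E \<le> d" unfolding boxicity_def by (rule Least_le)
qed

end
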